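(* Let $S^1=[0,1)$ with addition mod 1 and $T(x)=2x\pmod 1$. Let $\mu$ be the Gibbs probability for $\log J$, where $J:S^1\to\mathbb{R}$ is positive, Hölder continuous, with $\sum_{x:\,T(x)=y}J(x)=1$ for all $y$. For $n\in\mathbb{N}$ let $\nu_n=\mu*\mu*\cdots*\mu$ ($n$ factors). Then $\nu_n$ converges weakly, as $n\to\infty$, to the Lebesgue probability on $S^1$.
   Context: The Gibbs probability for $\log J$ is the probability $\mu$ with $\mathcal{L}_{\log J}^*\mu=\mu$, where $\mathcal{L}_{\log J}(\varphi)(y)=\sum_{x:\,T(x)=y}J(x)\varphi(x)$. Convolution: $\int\phi\,d(\eta*\mu)=\int\!\!\int\phi(x+y)\,d\mu(y)\,d\eta(x)$ (sums mod 1). *)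

theory Defs
  imports "HOL-Probability.Probability"
begin

definition S1 :: "real set" where "S1 = {0..<1}"

definition doubling :: "real \<Rightarrow> real" where "doubling x = frac (2 * x)"

definition circ_dist :: "real \<Rightarrow> real \<Rightarrow> real" where
  "circ_dist x y = min \<bar>x - y\<bar> (1 - \<bar>x - y\<bar>)"

definition circ_continuous :: "(real \<Rightarrow> real) \<Rightarrow> bool" where
  "circ_continuous f \<longleftrightarrow> (\<forall>x\<in>S1. \<forall>e>0. \<exists>d>0. \<forall>y\<in>S1. circ_dist x y < d \<longrightarrow> \<bar>f y - f x\<bar> < e)"

definition circ_holder :: "(real \<Rightarrow> real) \<Rightarrow> bool" where
  "circ_holder f \<longleftrightarrow> (\<exists>C \<alpha>. 0 < \<alpha> \<and> \<alpha> \<le> 1 \<and>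
     (\<forall>x\<in>S1. \<forall>y\<in>S1. \<bar>f x - f y\<bar> \<le> C * circ_dist x y powr \<alpha>))"

definition transfer :: "(real \<Rightarrow> real) \<Rightarrow> (real \<Rightarrow> real) \<Rightarrow> real \<Rightarrow> real" where
  "transfer J \<phi> y = (\<Sum>x\<in>{x\<in>S1. doubling x = y}. J x * \<phi> x)"

text \<open>Gibbs probability for log J: a probability on S1 (Borel sets of the reals,
  full mass on S1) with L^* mu = mu, tested against continuous functions on the circle.\<close>
definition gibbs_prob :: "(real \<Rightarrow> real) \<Rightarrow> real measure \<Rightarrow> bool" where
  "gibbs_prob J \<mu> \<longleftrightarrow> prob_space \<mu> \<and> sets \<mu> = sets borel \<and> emeasure \<mu> S1 = 1 \<and>
     (\<forall>\<phi>. circ_continuous \<phi> \<longrightarrow>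
        (LINT y:S1|\<mu>. transfer J \<phi> y) = (LINT y:S1|\<mu>. \<phi> y))"

definition circ_conv :: "real measure \<Rightarrow> real measure \<Rightarrow> real measure" where
  "circ_conv \<eta> \<mu> = distr (\<eta> \<Otimes>\<^sub>M \<mu>) borel (\<lambda>(x, y). frac (x + y))"

text \<open>conv_power mu n = mu * mu * ... * mu with n factors (n >= 1);
  the value at n = 0 is irrelevant and set to mu.\<close>
fun conv_power :: "real measure \<Rightarrow> nat \<Rightarrow> real measure" where
  "conv_power \<mu> 0 = \<mu>"
| "conv_power \<mu> (Suc 0) = \<mu>"
| "conv_power \<mu> (Suc (Suc n)) = circ_conv (conv_power \<mu> (Suc n)) \<mu>"

definition weak_conv_to_lebesgue :: "(nat \<Rightarrow> real measure) \<Rightarrow> bool" where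
  "weak_conv_to_lebesgue \<nu> \<longleftrightarrow> (\<forall>\<phi>. circ_continuous \<phi> \<longrightarrow>
     (\<lambda>n. LINT x:S1|\<nu> n. \<phi> x) \<longlonglongrightarrow> (LINT x:S1|lborel. \<phi> x))"

end

theory Submission
  imports Defs
begin


definition E :: "int \<Rightarrow> real \<Rightarrow> complex" where
  "E k x = cis (2 * pi * of_int k * x)"

lemma E_add: "E k (x + y) = E k x * E k y"
  by (simp add: E_def cis_mult distrib_left)

lemma E_int: "E k (of_int n) = 1"
proof -
  have "2 * pi * of_int k * of_int n = 2 * pi * of_int (k * n)" by simp
  then show ?thesis unfolding E_def by (metis Ints_of_int cis_multiple_2pi)
qed

lemma E_frac: "E k (frac x) = E k x"
proof -
  have "x = frac x + of_int \<lfloor>x\<rfloor>" by (simp add: frac_def)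
  then have "E k x = E k (frac x) * E k (of_int \<lfloor>x\<rfloor>)" by (metis E_add)
  then show ?thesis by (simp add: E_int)
qed

lemma E_norm [simp]: "norm (E k x) = 1"
  by (simp add: E_def)

lemma E_zero [simp]: "E 0 x = 1"
  by (simp add: E_def)

lemma E_minus: "E (- k) x = cnj (E k x)"
  by (simp add: E_def cis_cnj)

lemma E_mult: "E k x * E l x = E (k + l) x"
  by (simp add: E_def cis_mult distrib_left distrib_right algebra_simps)

lemma E_one: "E 1 x = cis (2 * pi * x)"
  by (simp add: E_def)

lemma continuous_E [continuous_intros]: "continuous_on A (E k)"
  unfolding E_def by (intro continuous_intros)

lemma measurable_E [measurable]: "E k \<in> borel_measurable borel"
  using continuous_E borel_measurable_continuous_onI by blast

definition LC :: "(real \<Rightarrow> complex) \<Rightarrow> bool" where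
  "LC f \<longleftrightarrow> (\<exists>K a. finite K \<and> (\<forall>t. f t = (\<Sum>k\<in>K. a k * E k t)))"

lemma LC_single: "LC (\<lambda>t. c * E k t)"
  unfolding LC_def by (rule exI[of _ "{k}"], rule exI[of _ "\<lambda>_. c"]) simp

lemma LC_const: "LC (\<lambda>t. c)"
  using LC_single[of c 0] by simp

lemma LC_add: assumes "LC f" "LC g" shows "LC (\<lambda>t. f t + g t)"
proof -
  obtain K a where K: "finite K" "\<forall>t. f t = (\<Sum>k\<in>K. a k * E k t)" using assms(1) LC_def by auto
  obtain L b where L: "finite L" "\<forall>t. g t = (\<Sum>k\<in>L. b k * E k t)" using assms(2) LC_def by auto
  define c where "c k = (if k \<in> K then a k else 0) + (if k \<in> L then b k else 0)" for k
  have "\<forall>t. f t + g t = (\<Sum>k\<in>K \<union> L. c k * E k t)"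
  proof
    fix t
    have 1: "(\<Sum>k\<in>K \<union> L. (if k \<in> K then a k else 0) * E k t) = (\<Sum>k\<in>K. a k * E k t)"
      by (rule sum.mono_neutral_cong_right) (use K L in auto)
    have 2: "(\<Sum>k\<in>K \<union> L. (if k \<in> L then b k else 0) * E k t) = (\<Sum>k\<in>L. b k * E k t)"
      by (rule sum.mono_neutral_cong_right) (use K L in auto)
    show "f t + g t = (\<Sum>k\<in>K \<union> L. c k * E k t)"
      using 1 2 K L by (simp add: c_def distrib_right sum.distrib)
  qed
  then show ?thesis unfolding LC_def using K L by blast
qed

lemma LC_sum: assumes "finite I" "\<And>i. i \<in> I \<Longrightarrow> LC (f i)" shows "LC (\<lambda>t. \<Sum>i\<in>I. f i t)"
  using assms
proof (induction I rule: finite_induct)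
  case empty then show ?case using LC_const[of 0] by simp
next
  case (insert x F)
  then show ?case by (simp add: LC_add)
qed

lemma LC_mult: assumes "LC f" "LC g" shows "LC (\<lambda>t. f t * g t)"
proof -
  obtain K a where K: "finite K" "\<forall>t. f t = (\<Sum>k\<in>K. a k * E k t)" using assms(1) LC_def by auto
  obtain L b where L: "finite L" "\<forall>t. g t = (\<Sum>k\<in>L. b k * E k t)" using assms(2) LC_def by auto
  have eq: "f t * g t = (\<Sum>k\<in>K. \<Sum>l\<in>L. (a k * b l) * E (k + l) t)" for t
    using K L by (simp add: sum_product E_mult[symmetric] algebra_simps)
  have "LC (\<lambda>t. \<Sum>k\<in>K. \<Sum>l\<in>L. (a k * b l) * E (k + l) t)"
    using K L by (intro LC_sum LC_single) auto
  then show ?thesis using eq by simp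
qed

lemma cos_sin_cis: "complex_of_real (cos x * a + sin x * b) = ((a - \<i> * b) / 2) * cis x + ((a + \<i> * b) / 2) * cnj (cis x)"
  apply (simp add: complex_eq_iff algebra_simps)
  apply (simp add: field_simps)
  done

lemma LC_poly:
  fixes g :: "complex \<Rightarrow> real"
  assumes "real_polynomial_function g"
  shows "LC (\<lambda>t. complex_of_real (g (cis (2 * pi * t))))"
  using assms
proof (induction rule: real_polynomial_function.induct)
  case (linear f)
  interpret bounded_linear f by fact
  have fz: "f z = Re z * f 1 + Im z * f \<i>" for z
  proof -
    have "z = of_real (Re z) * 1 + of_real (Im z) * \<i>" by (simp add: complex_eq_iff)
    then have "f z = f (of_real (Re z) * 1 + of_real (Im z) * \<i>)" by (rule arg_cong)
    also have "\<dots> = f (Re z *\<^sub>R 1 + Im z *\<^sub>R \<i>)" by (simp add: scaleR_conv_of_real)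
    also have "\<dots> = Re z * f 1 + Im z * f \<i>" by (simp add: add scale)
    finally show ?thesis .
  qed
  have eq: "complex_of_real (f (cis (2 * pi * t))) =
      ((f 1 - \<i> * f \<i>) / 2) * E 1 t + ((f 1 + \<i> * f \<i>) / 2) * E (-1) t" for t
  proof -
    have "f (cis (2 * pi * t)) = cos (2 * pi * t) * f 1 + sin (2 * pi * t) * f \<i>"
      using fz[of "cis (2 * pi * t)"] by simp
    then show ?thesis
      using cos_sin_cis[of "2 * pi * t" "f 1" "f \<i>"] by (simp add: E_minus E_one)
  qed
  show ?case unfolding eq by (intro LC_add LC_single)
next
  case (const c) then show ?case by (rule LC_const)
next
  case (add f g) then show ?case by (simp add: LC_add)
next
  case (mult f g) then show ?case by (simp add: LC_mult)
qed



lemma circ_dist_frac: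
  assumes "x \<in> {0..1}" "y \<in> {0..1}"
  shows "circ_dist (frac x) (frac y) \<le> \<bar>x - y\<bar>"
proof -
  have f: "frac t = (if t = 1 then 0 else t)" if "t \<in> {0..1}" for t :: real
    using that by (auto simp: frac_eq)
  show ?thesis using assms by (auto simp: f circ_dist_def)
qed

lemma circ_dist_le: "circ_dist x y \<le> \<bar>x - y\<bar>"
  by (simp add: circ_dist_def)

lemma circ_dist_sym: "circ_dist x y = circ_dist y x"
  by (simp add: circ_dist_def abs_minus_commute)

lemma cont_frac_comp:
  assumes "circ_continuous \<phi>"
  shows "continuous_on {0..1} (\<lambda>t. \<phi> (frac t))"
  unfolding continuous_on_iff
proof (intro ballI allI impI)
  fix x e :: real assume x: "x \<in> {0..1}" and e: "0 < e"
  have fx: "frac x \<in> S1" by (simp add: S1_def frac_lt_1)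
  obtain d where d: "d > 0" "\<forall>y\<in>S1. circ_dist (frac x) y < d \<longrightarrow> \<bar>\<phi> y - \<phi> (frac x)\<bar> < e"
    using assms fx e unfolding circ_continuous_def by blast
  show "\<exists>d>0. \<forall>x'\<in>{0..1}. dist x' x < d \<longrightarrow> dist (\<phi> (frac x')) (\<phi> (frac x)) < e"
  proof (intro exI[of _ d] conjI ballI impI)
    fix y assume y: "y \<in> {0..1}" "dist y x < d"
    have "circ_dist (frac x) (frac y) < d"
      using circ_dist_frac[OF x y(1)] y(2) by (simp add: dist_real_def abs_minus_commute)
    moreover have "frac y \<in> S1" by (simp add: S1_def frac_lt_1)
    ultimately show "dist (\<phi> (frac y)) (\<phi> (frac x)) < e"
      using d(2) by (simp add: dist_real_def)
  qed (use d in auto)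
qed

lemma cis_2pi_inj:
  assumes "s \<in> S1" "s' \<in> S1" "cis (2 * pi * s) = cis (2 * pi * s')"
  shows "s = s'"
proof -
  have "cis (2 * pi * (s - s')) = 1"
    using assms(3) by (metis cis_divide divide_self_if cis_neq_zero right_diff_distrib)
  then have "cos (2 * pi * (s - s')) = 1" by (metis cis.sel(1) one_complex.sel(1))
  then obtain n :: int where n: "2 * pi * (s - s') = of_int n * (2 * pi)"
    by (auto simp: cos_one_2pi_int)
  then have "s - s' = of_int n" by simp
  moreover have "\<bar>s - s'\<bar> < 1" using assms(1,2) by (auto simp: S1_def)
  ultimately have "\<bar>n\<bar> < 1" by linarith
  then have "n = 0" by simp
  then show ?thesis using \<open>s - s' = of_int n\<close> by simp
qed

lemma cis_2pi_surj:
  assumes "norm z = 1"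
  shows "\<exists>t\<in>S1. cis (2 * pi * t) = z"
proof -
  have z0: "z \<noteq> 0" using assms by auto
  define t where "t = frac (Arg z / (2 * pi))"
  have "cis (2 * pi * t) = E 1 t" by (simp add: E_def)
  also have "\<dots> = E 1 (Arg z / (2 * pi))" unfolding t_def by (rule E_frac)
  also have "\<dots> = cis (Arg z)" by (simp add: E_def)
  also have "\<dots> = z" using z0 assms by (simp add: cis_Arg complex_sgn_def)
  finally show ?thesis unfolding t_def S1_def by (intro bexI[of _ t]) (auto simp: frac_lt_1 t_def)
qed

lemma trig_approx:
  assumes "circ_continuous \<phi>" "e > 0"
  shows "\<exists>h. LC h \<and> (\<forall>t\<in>S1. \<bar>\<phi> t - Re (h t)\<bar> < e)"
proof -
  define q :: "real \<Rightarrow> complex" where "q t = cis (2 * pi * t)" for t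
  define F where "F z = \<phi> (SOME s. s \<in> S1 \<and> q s = z)" for z
  have Fq: "F (q t) = \<phi> (frac t)" for t
  proof -
    have ft: "frac t \<in> S1" by (simp add: S1_def frac_lt_1)
    have qf: "q (frac t) = q t" unfolding q_def using E_frac[of 1 t] by (simp add: E_def)
    have "(SOME s. s \<in> S1 \<and> q s = q t) = frac t"
    proof (rule some_equality)
      show "frac t \<in> S1 \<and> q (frac t) = q t" using ft qf by simp
      fix s assume "s \<in> S1 \<and> q s = q t"
      then show "s = frac t" using cis_2pi_inj[of s "frac t"] ft qf unfolding q_def by auto
    qed
    then show ?thesis unfolding F_def by simp
  qed
  have img: "q ` {0..1} = sphere 0 1"
  proof
    show "q ` {0..1} \<subseteq> sphere 0 1" by (auto simp: q_def)
    show "sphere 0 1 \<subseteq> q ` {0..1}"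
    proof
      fix z :: complex assume "z \<in> sphere 0 1"
      then obtain t where "t \<in> S1" "cis (2 * pi * t) = z" using cis_2pi_surj by auto
      then show "z \<in> q ` {0..1}" unfolding q_def S1_def by (intro image_eqI[of _ _ t]) auto
    qed
  qed
  have qc: "continuous_on {0..1} q" unfolding q_def by (intro continuous_intros)
  have quot: "quotient_map (top_of_set {0..1}) (top_of_set (sphere 0 1)) q"
  proof (rule continuous_imp_quotient_map)
    show "continuous_map (top_of_set {0..1}) (top_of_set (sphere 0 1)) q"
      using qc img by (auto simp: continuous_map_in_subtopology)
    show "compact_space (top_of_set {0..1::real})"
      by (simp add: compact_space_subtopology compactin_euclidean_iff)
    show "Hausdorff_space (top_of_set (sphere (0::complex) 1))"
      by (simp add: Hausdorff_space_subtopology)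
    show "q ` topspace (top_of_set {0..1}) = topspace (top_of_set (sphere 0 1))"
      using img by simp
  qed
  have "continuous_on {0..1} (F \<circ> q)"
    using cont_frac_comp[OF assms(1)] by (rule continuous_on_cong[THEN iffD1, rotated 2]) (auto simp: Fq)
  then have "continuous_map (top_of_set {0..1}) euclidean (F \<circ> q)" by simp
  then have "continuous_map (top_of_set (sphere 0 1)) euclidean F"
    using continuous_compose_quotient_map[OF quot] by blast
  then have Fc: "continuous_on (sphere 0 1) F" by simp
  obtain g where g: "real_polynomial_function g" "\<And>z. z \<in> sphere 0 1 \<Longrightarrow> \<bar>F z - g z\<bar> < e"
    using Stone_Weierstrass_real_polynomial_function[OF compact_sphere Fc assms(2)] by blast
  define h where "h t = complex_of_real (g (cis (2 * pi * t)))" for t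
  have "LC h" unfolding h_def by (rule LC_poly[OF g(1)])
  moreover have "\<bar>\<phi> t - Re (h t)\<bar> < e" if "t \<in> S1" for t
  proof -
    have "frac t = t" using that by (simp add: S1_def frac_eq)
    then have "F (q t) = \<phi> t" by (simp add: Fq)
    moreover have "q t \<in> sphere 0 1" by (simp add: q_def)
    ultimately show ?thesis using g(2)[of "q t"] by (simp add: h_def q_def)
  qed
  ultimately show ?thesis by blast
qed



lemma frac_sum_meas: "(\<lambda>(x::real, y::real). frac (x + y)) \<in> borel_measurable (borel \<Otimes>\<^sub>M borel)"
  unfolding frac_def by measurable

lemma circ_conv_props:
  assumes pn: "prob_space \<nu>" and sn: "sets \<nu> = sets borel"
    and pm: "prob_space \<mu>" and sm: "sets \<mu> = sets borel"
  shows "prob_space (circ_conv \<nu> \<mu>)" "sets (circ_conv \<nu> \<mu>) = sets borel"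
    "emeasure (circ_conv \<nu> \<mu>) S1 = 1"
    "integral\<^sup>L (circ_conv \<nu> \<mu>) (E k) = integral\<^sup>L \<nu> (E k) * integral\<^sup>L \<mu> (E k)"
proof -
  interpret P: pair_sigma_finite \<nu> \<mu>
    by (intro pair_sigma_finite.intro prob_space_imp_sigma_finite pn pm)
  have pp: "prob_space (\<nu> \<Otimes>\<^sub>M \<mu>)" by (rule prob_space_pair[OF pn pm])
  have cs: "sets (\<nu> \<Otimes>\<^sub>M \<mu>) = sets (borel \<Otimes>\<^sub>M borel)"
    by (rule sets_pair_measure_cong[OF sn sm])
  have bm: "f \<in> borel_measurable (\<nu> \<Otimes>\<^sub>M \<mu>)" if "f \<in> borel_measurable (borel \<Otimes>\<^sub>M borel)" for f :: "_ \<Rightarrow> 'b::topological_space"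
    using that measurable_cong_sets[OF cs refl] by blast
  have m: "(\<lambda>(x, y). frac (x + y)) \<in> borel_measurable (\<nu> \<Otimes>\<^sub>M \<mu>)"
    by (rule bm[OF frac_sum_meas])
  show "prob_space (circ_conv \<nu> \<mu>)" unfolding circ_conv_def
    by (rule prob_space.prob_space_distr[OF pp m])
  show "sets (circ_conv \<nu> \<mu>) = sets borel" unfolding circ_conv_def by simp
  have "emeasure (circ_conv \<nu> \<mu>) S1 = emeasure (\<nu> \<Otimes>\<^sub>M \<mu>) ((\<lambda>(x, y). frac (x + y)) -` S1 \<inter> space (\<nu> \<Otimes>\<^sub>M \<mu>))"
    unfolding circ_conv_def by (rule emeasure_distr[OF m]) (simp add: S1_def)
  also have "(\<lambda>(x, y). frac (x + y)) -` S1 \<inter> space (\<nu> \<Otimes>\<^sub>M \<mu>) = space (\<nu> \<Otimes>\<^sub>M \<mu>)"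
    by (auto simp: S1_def frac_lt_1)
  also have "emeasure (\<nu> \<Otimes>\<^sub>M \<mu>) (space (\<nu> \<Otimes>\<^sub>M \<mu>)) = 1"
    using prob_space.emeasure_space_1[OF pp] .
  finally show "emeasure (circ_conv \<nu> \<mu>) S1 = 1" .
  have "integral\<^sup>L (circ_conv \<nu> \<mu>) (E k) = integral\<^sup>L (\<nu> \<Otimes>\<^sub>M \<mu>) (\<lambda>z. E k ((\<lambda>(x, y). frac (x + y)) z))"
    unfolding circ_conv_def by (rule integral_distr[OF m]) simp
  also have "\<dots> = integral\<^sup>L (\<nu> \<Otimes>\<^sub>M \<mu>) (\<lambda>(x, y). E k x * E k y)"
    by (rule Bochner_Integration.integral_cong) (auto simp: E_frac E_add)
  also have "\<dots> = (\<integral>x. (\<integral>y. E k x * E k y \<partial>\<mu>) \<partial>\<nu>)"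
  proof (rule P.integral_fst[symmetric])
    have "(\<lambda>(x, y). E k x * E k y) \<in> borel_measurable (borel \<Otimes>\<^sub>M borel)" by measurable
    then have "(\<lambda>(x, y). E k x * E k y) \<in> borel_measurable (\<nu> \<Otimes>\<^sub>M \<mu>)" by (rule bm)
    then show "integrable (\<nu> \<Otimes>\<^sub>M \<mu>) (\<lambda>(x, y). E k x * E k y)"
      by (intro finite_measure.integrable_const_bound[where B=1] prob_space.finite_measure pp)
         (auto simp: norm_mult)
  qed
  also have "\<dots> = (\<integral>x. E k x * integral\<^sup>L \<mu> (E k) \<partial>\<nu>)" by simp
  also have "\<dots> = integral\<^sup>L \<nu> (E k) * integral\<^sup>L \<mu> (E k)" by simp
  finally show "integral\<^sup>L (circ_conv \<nu> \<mu>) (E k) = integral\<^sup>L \<nu> (E k) * integral\<^sup>L \<mu> (E k)" .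
qed

lemma conv_power_props:
  assumes pm: "prob_space \<mu>" and sm: "sets \<mu> = sets borel" and em: "emeasure \<mu> S1 = 1"
  shows "prob_space (conv_power \<mu> (Suc n)) \<and> sets (conv_power \<mu> (Suc n)) = sets borel \<and>
     emeasure (conv_power \<mu> (Suc n)) S1 = 1 \<and>
     (\<forall>k. integral\<^sup>L (conv_power \<mu> (Suc n)) (E k) = integral\<^sup>L \<mu> (E k) ^ Suc n)"
proof (induction n)
  case 0 then show ?case using assms by simp
next
  case (Suc n)
  then show ?case using circ_conv_props[of "conv_power \<mu> (Suc n)" \<mu>] pm sm by simp
qed

lemma set_int_full:
  assumes "prob_space \<nu>" "sets \<nu> = sets borel" "emeasure \<nu> S1 = 1"
    and f: "f \<in> borel_measurable borel"
  shows "(LINT x:S1|\<nu>. f x) = integral\<^sup>L \<nu> f"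
proof -
  have S: "S1 \<in> sets \<nu>" using assms(2) by (simp add: S1_def)
  have "measure \<nu> S1 = 1" using assms(3) by (simp add: measure_def)
  then have ae: "AE x in \<nu>. x \<in> S1" using prob_space.AE_in_set_eq_1[OF assms(1) S] by simp
  have fm: "f \<in> borel_measurable \<nu>" using f measurable_cong_sets[OF assms(2) refl] by blast
  show ?thesis unfolding set_lebesgue_integral_def
    by (rule integral_cong_AE) (use ae fm S in auto)
qed



lemma S1_half: "y \<in> S1 \<Longrightarrow> y / 2 \<in> S1" "y \<in> S1 \<Longrightarrow> (y + 1) / 2 \<in> S1"
  by (auto simp: S1_def)

lemma preimg:
  assumes "y \<in> S1"
  shows "{x\<in>S1. doubling x = y} = {y / 2, (y + 1) / 2}"
proof
  have y: "0 \<le> y" "y < 1" using assms by (auto simp: S1_def)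
  show "{y / 2, (y + 1) / 2} \<subseteq> {x\<in>S1. doubling x = y}"
  proof -
    have e: "2 * ((y + 1) / 2) = y + 1" by simp
    have "frac (y + 1) = y" using y by (simp add: frac_unique_iff)
    then have "frac (2 * ((y + 1) / 2)) = y" by (simp only: e)
    moreover have "frac (2 * (y / 2)) = y" using y by (simp add: frac_eq)
    ultimately show ?thesis using S1_half[OF assms] by (auto simp: doubling_def)
  qed
  show "{x\<in>S1. doubling x = y} \<subseteq> {y / 2, (y + 1) / 2}"
  proof
    fix x assume x: "x \<in> {x\<in>S1. doubling x = y}"
    then have x01: "0 \<le> x" "x < 1" and fx: "frac (2 * x) = y" by (auto simp: S1_def doubling_def)
    show "x \<in> {y / 2, (y + 1) / 2}"
    proof (cases "2 * x < 1")
      case True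
      then have "frac (2 * x) = 2 * x" using x01 by (simp add: frac_eq)
      then show ?thesis using fx by auto
    next
      case False
      then have "frac (2 * x) = 2 * x - 1" using x01
        by (subst frac_unique_iff) (auto simp: Ints_def intro: exI[of _ 1])
      then show ?thesis using fx by auto
    qed
  qed
qed

lemma transfer_eq:
  assumes "y \<in> S1"
  shows "transfer J \<phi> y = J (y / 2) * \<phi> (y / 2) + J ((y + 1) / 2) * \<phi> ((y + 1) / 2)"
  unfolding transfer_def preimg[OF assms] by simp

lemma periodic_circ_continuous:
  assumes c: "\<And>x. isCont f x" and p: "\<And>x. f (x + 1) = f x"
  shows "circ_continuous f"
  unfolding circ_continuous_def
proof (intro ballI allI impI)
  fix x e :: real assume x: "x \<in> S1" and e: "0 < e"
  obtain d where d: "d > 0" "\<forall>x'. dist x' x < d \<longrightarrow> dist (f x') (f x) < e"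
    using c[of x] e unfolding continuous_at_eps_delta by blast
  show "\<exists>d>0. \<forall>y\<in>S1. circ_dist x y < d \<longrightarrow> \<bar>f y - f x\<bar> < e"
  proof (intro exI[of _ d] conjI ballI impI)
    fix y assume y: "y \<in> S1" "circ_dist x y < d"
    have pm: "f (y - 1) = f y" using p[of "y - 1"] by simp
    have xy1: "\<bar>x - y\<bar> < 1" using x y(1) by (auto simp: S1_def)
    show "\<bar>f y - f x\<bar> < e"
    proof (cases "\<bar>x - y\<bar> < d")
      case True
      then show ?thesis using d(2)[rule_format, of y] by (simp add: dist_real_def abs_minus_commute)
    next
      case False
      then have "1 - \<bar>x - y\<bar> < d" using y(2) xy1 by (auto simp: circ_dist_def min_def split: if_splits)
      then consider "\<bar>(y + 1) - x\<bar> < d" | "\<bar>(y - 1) - x\<bar> < d"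
        using xy1 by (cases "y < x") (auto simp: abs_if split: if_splits)
      then show ?thesis
      proof cases
        case 1 then show ?thesis using d(2)[rule_format, of "y + 1"] p[of y] by (simp add: dist_real_def)
      next
        case 2 then show ?thesis using d(2)[rule_format, of "y - 1"] pm by (simp add: dist_real_def)
      qed
    qed
  qed (use d in auto)
qed

lemma E_period: "E k (x + 1) = E k x"
  using E_add[of k x 1] E_int[of k 1] by simp

lemma circ_continuous_ReE: "circ_continuous (\<lambda>x. Re (E k x))"
  apply (rule periodic_circ_continuous)
   apply (simp add: E_def; intro continuous_intros)
  apply (metis E_period)
  done

lemma circ_continuous_ImE: "circ_continuous (\<lambda>x. Im (E k x))"
  apply (rule periodic_circ_continuous)
   apply (simp add: E_def; intro continuous_intros)
  apply (metis E_period)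
  done

lemma holder_cont:
  assumes "circ_holder J"
  shows "continuous_on S1 J"
proof -
  obtain C \<alpha> where a: "0 < \<alpha>" "\<alpha> \<le> 1" and H: "\<forall>x\<in>S1. \<forall>y\<in>S1. \<bar>J x - J y\<bar> \<le> C * circ_dist x y powr \<alpha>"
    using assms unfolding circ_holder_def by blast
  show ?thesis unfolding continuous_on_iff
  proof (intro ballI allI impI)
    fix x e :: real assume x: "x \<in> S1" and e: "0 < e"
    define d where "d = (e / (\<bar>C\<bar> + 1)) powr (1 / \<alpha>)"
    have d0: "d > 0" unfolding d_def using e by simp
    have dp: "d powr \<alpha> = e / (\<bar>C\<bar> + 1)" unfolding d_def using a e by (simp add: powr_powr)
    show "\<exists>d>0. \<forall>x'\<in>S1. dist x' x < d \<longrightarrow> dist (J x') (J x) < e"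
    proof (intro exI[of _ d] conjI ballI impI d0)
      fix y assume y: "y \<in> S1" "dist y x < d"
      have cd0: "0 \<le> circ_dist y x" using x y(1) by (auto simp: circ_dist_def S1_def)
      have "circ_dist y x < d" using circ_dist_le[of y x] y(2) by (simp add: dist_real_def)
      then have lt: "circ_dist y x powr \<alpha> < e / (\<bar>C\<bar> + 1)"
        using powr_less_mono2[OF a(1) cd0] dp by metis
      have "\<bar>J y - J x\<bar> \<le> C * circ_dist y x powr \<alpha>" using H x y(1) by blast
      also have "\<dots> \<le> \<bar>C\<bar> * circ_dist y x powr \<alpha>" by (intro mult_right_mono) auto
      also have "\<dots> \<le> \<bar>C\<bar> * (e / (\<bar>C\<bar> + 1))" using lt by (intro mult_left_mono) auto
      also have "\<dots> < e" using e by (simp add: field_simps)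
      finally show "dist (J y) (J x) < e" by (simp add: dist_real_def)
    qed
  qed
qed

lemma set_int_Re: assumes "set_integrable M A f" shows "Re (LINT x:A|M. f x) = (LINT x:A|M. Re (f x))"
proof -
  have "Re (integral\<^sup>L M (\<lambda>x. indicator A x *\<^sub>R f x)) = integral\<^sup>L M (\<lambda>x. Re (indicator A x *\<^sub>R f x))"
    by (rule integral_Re[symmetric]) (use assms in \<open>simp add: set_integrable_def\<close>)
  also have "(\<lambda>x. Re (indicator A x *\<^sub>R f x)) = (\<lambda>x. indicator A x *\<^sub>R Re (f x))" by auto
  finally show ?thesis unfolding set_lebesgue_integral_def .
qed
lemma set_int_Im: assumes "set_integrable M A f" shows "Im (LINT x:A|M. f x) = (LINT x:A|M. Im (f x))"
proof -
  have "Im (integral\<^sup>L M (\<lambda>x. indicator A x *\<^sub>R f x)) = integral\<^sup>L M (\<lambda>x. Im (indicator A x *\<^sub>R f x))"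
    by (rule integral_Im[symmetric]) (use assms in \<open>simp add: set_integrable_def\<close>)
  also have "(\<lambda>x. Im (indicator A x *\<^sub>R f x)) = (\<lambda>x. indicator A x *\<^sub>R Im (f x))" by auto
  finally show ?thesis unfolding set_lebesgue_integral_def .
qed

lemma S1_integrable:
  fixes f :: "real \<Rightarrow> 'b::{banach, second_countable_topology}"
  assumes sM: "sets M = sets borel" and fin: "emeasure M S1 < \<infinity>"
    and c: "continuous_on S1 f" and b: "\<And>x. x \<in> S1 \<Longrightarrow> norm (f x) \<le> B"
  shows "set_integrable M S1 f"
proof -
  have "(\<lambda>x. indicator S1 x *\<^sub>R f x) \<in> borel_measurable borel"
    by (rule borel_measurable_continuous_on_indicator[OF _ c]) (simp add: S1_def)
  then have mb: "(\<lambda>x. indicator S1 x *\<^sub>R f x) \<in> borel_measurable M"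
    using measurable_cong_sets[OF sM refl] by blast
  have "integrable M (indicator S1 :: real \<Rightarrow> real)"
    using sM fin by (intro integrable_real_indicator) (auto simp: S1_def)
  then have ib: "integrable M (\<lambda>x. B * indicator S1 x)" by auto
  show ?thesis unfolding set_integrable_def
  proof (rule Bochner_Integration.integrable_bound[OF ib mb])
    show "AE x in M. norm (indicator S1 x *\<^sub>R f x) \<le> norm (B * indicator S1 x)"
    proof (rule AE_I2)
      fix x show "norm (indicator S1 x *\<^sub>R f x) \<le> norm (B * indicator S1 x)"
        using b[of x] by (auto simp: indicator_def)
    qed
  qed
qed

locale gibbs_setup =
  fixes J :: "real \<Rightarrow> real" and \<mu> :: "real measure"
  assumes Jpos: "\<forall>x\<in>S1. J x > 0"
    and Jhol: "circ_holder J"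
    and Jsum0: "\<forall>y\<in>S1. (\<Sum>x\<in>{x\<in>S1. doubling x = y}. J x) = 1"
    and gib: "gibbs_prob J \<mu>"
begin

lemma pm: "prob_space \<mu>" and sm: "sets \<mu> = sets borel" and em: "emeasure \<mu> S1 = 1"
  using gib by (auto simp: gibbs_prob_def)

lemma Jsum: assumes y: "y \<in> S1" shows "J (y / 2) + J ((y + 1) / 2) = 1"
proof -
  have "(\<Sum>x\<in>{x\<in>S1. doubling x = y}. J x) = 1" using Jsum0 y by blast
  moreover have "y / 2 \<noteq> (y + 1) / 2" by (simp add: field_simps)
  ultimately show ?thesis by (simp add: preimg[OF y])
qed

lemma S1_sets: "S1 \<in> sets \<mu>" using sm by (simp add: S1_def)

definition c :: "int \<Rightarrow> complex" where "c k = integral\<^sup>L \<mu> (E k)"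

lemma c_set: "c k = (LINT x:S1|\<mu>. E k x)"
  unfolding c_def by (rule set_int_full[OF pm sm em measurable_E, symmetric])

lemma JC: "continuous_on S1 J" by (rule holder_cont[OF Jhol])
lemma Jc1: "continuous_on S1 (\<lambda>y. J (y / 2))"
    by (rule continuous_on_compose2[OF JC]) (auto intro!: continuous_intros simp: S1_half)
lemma Jc2: "continuous_on S1 (\<lambda>y. J ((y + 1) / 2))"
    by (rule continuous_on_compose2[OF JC]) (auto intro!: continuous_intros simp: S1_half)


lemma fin_mu: "emeasure \<mu> S1 < \<infinity>" using em by simp

lemma E_int_S1: "set_integrable \<mu> S1 (E k)"
  by (rule S1_integrable[OF sm fin_mu continuous_E, where B=1]) simp

definition g :: "int \<Rightarrow> real \<Rightarrow> complex" where
  "g k y = J (y / 2) * E k (y / 2) + J ((y + 1) / 2) * E k ((y + 1) / 2)"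

lemma g_int_S1: "set_integrable \<mu> S1 (g k)"
proof (rule S1_integrable[OF sm fin_mu, where B=1])
  show "continuous_on S1 (g k)" unfolding g_def
    by (intro continuous_intros Jc1 Jc2 continuous_on_compose2[OF continuous_E[of UNIV]]) auto
  fix y assume y: "y \<in> S1"
  have p: "J (y / 2) > 0" "J ((y + 1) / 2) > 0" using Jpos S1_half[OF y] by auto
  have "norm (g k y) \<le> norm (complex_of_real (J (y / 2)) * E k (y / 2)) + norm (complex_of_real (J ((y + 1) / 2)) * E k ((y + 1) / 2))"
    unfolding g_def by (rule norm_triangle_ineq)
  also have "\<dots> = J (y / 2) + J ((y + 1) / 2)" using p by (simp add: norm_mult)
  finally show "norm (g k y) \<le> 1" using Jsum[OF y] by simp
qed

lemma gibbs_E: "(LINT y:S1|\<mu>. g k y) = c k"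
proof (rule complex_eqI)
  have G: "(LINT y:S1|\<mu>. transfer J \<phi> y) = (LINT y:S1|\<mu>. \<phi> y)" if "circ_continuous \<phi>" for \<phi>
    using gib that unfolding gibbs_prob_def by blast
  have "Re (LINT y:S1|\<mu>. g k y) = (LINT y:S1|\<mu>. Re (g k y))" by (rule set_int_Re[OF g_int_S1])
  also have "\<dots> = (LINT y:S1|\<mu>. transfer J (\<lambda>x. Re (E k x)) y)"
    by (rule set_lebesgue_integral_cong[OF S1_sets]) (auto simp: transfer_eq g_def)
  also have "\<dots> = (LINT y:S1|\<mu>. Re (E k y))" by (rule G[OF circ_continuous_ReE])
  also have "\<dots> = Re (c k)" by (simp add: c_set set_int_Re[OF E_int_S1])
  finally show "Re (LINT y:S1|\<mu>. g k y) = Re (c k)" .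
  have "Im (LINT y:S1|\<mu>. g k y) = (LINT y:S1|\<mu>. Im (g k y))" by (rule set_int_Im[OF g_int_S1])
  also have "\<dots> = (LINT y:S1|\<mu>. transfer J (\<lambda>x. Im (E k x)) y)"
    by (rule set_lebesgue_integral_cong[OF S1_sets]) (auto simp: transfer_eq g_def)
  also have "\<dots> = (LINT y:S1|\<mu>. Im (E k y))" by (rule G[OF circ_continuous_ImE])
  also have "\<dots> = Im (c k)" by (simp add: c_set set_int_Im[OF E_int_S1])
  finally show "Im (LINT y:S1|\<mu>. g k y) = Im (c k)" .
qed

lemma c_double: "c (2 * m) = c m"
proof -
  have "c (2 * m) = (LINT y:S1|\<mu>. g (2 * m) y)" by (rule gibbs_E[symmetric])
  also have "\<dots> = (LINT y:S1|\<mu>. E m y)"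
  proof (rule set_lebesgue_integral_cong[OF S1_sets], intro allI impI)
    fix y assume y: "y \<in> S1"
    have 1: "E (2 * m) (y / 2) = E m y" unfolding E_def by (rule arg_cong[where f=cis]) simp
    have "E (2 * m) ((y + 1) / 2) = E m (y + 1)" unfolding E_def by (rule arg_cong[where f=cis]) (simp add: field_simps)
    then have 2: "E (2 * m) ((y + 1) / 2) = E m y" by (simp add: E_period)
    have "g (2 * m) y = complex_of_real (J (y / 2) + J ((y + 1) / 2)) * E m y"
      unfolding g_def 1 2 by (simp add: distrib_right)
    then show "g (2 * m) y = E m y" using Jsum[OF y] by simp
  qed
  also have "\<dots> = c m" by (simp add: c_set)
  finally show ?thesis .
qed


definition D :: "real \<Rightarrow> real" where "D y = \<bar>J (y / 2) - J ((y + 1) / 2)\<bar>"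

lemma D_lt: assumes y: "y \<in> S1" shows "D y < 1"
proof -
  have "J (y / 2) > 0" "J ((y + 1) / 2) > 0" using Jpos S1_half[OF y] by auto
  then show ?thesis using Jsum[OF y] by (simp add: D_def abs_less_iff)
qed

lemma D_cont: "continuous_on S1 D"
  unfolding D_def by (intro continuous_intros Jc1 Jc2)

lemma D_int_lt: "(LINT y:S1|\<mu>. D y) < 1"
proof -
  interpret prob_space \<mu> by (rule pm)
  have mb: "(\<lambda>x. indicator S1 x *\<^sub>R D x) \<in> borel_measurable borel"
    by (rule borel_measurable_continuous_on_indicator[OF _ D_cont]) (simp add: S1_def)
  then have mb': "(\<lambda>x. indicator S1 x *\<^sub>R D x) \<in> borel_measurable \<mu>"
    using measurable_cong_sets[OF sm refl] by blast
  have intX: "integrable \<mu> (\<lambda>x. indicator S1 x *\<^sub>R D x)"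
  proof (rule integrable_const_bound[where B=1])
    show "AE x in \<mu>. norm (indicator S1 x *\<^sub>R D x) \<le> 1"
    proof (rule AE_I2)
      fix x show "norm (indicator S1 x *\<^sub>R D x) \<le> 1"
        using D_lt[of x] by (auto simp: indicator_def D_def)
    qed
  qed (rule mb')
  have intY: "integrable \<mu> (indicator S1 :: real \<Rightarrow> real)"
    using S1_sets em by (intro integrable_real_indicator) auto
  have "(LINT y:S1|\<mu>. D y) = integral\<^sup>L \<mu> (\<lambda>x. indicator S1 x *\<^sub>R D x)"
    by (simp add: set_lebesgue_integral_def)
  also have "\<dots> < integral\<^sup>L \<mu> (indicator S1 :: real \<Rightarrow> real)"
  proof (rule integral_less_AE[OF intX intY, where A=S1])
    show "emeasure \<mu> S1 \<noteq> 0" using em by simp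
    show "AE x in \<mu>. x \<in> S1 \<longrightarrow> indicator S1 x *\<^sub>R D x \<noteq> indicator S1 x"
      by (rule AE_I2) (auto simp: indicator_def dest: D_lt)
    show "AE x in \<mu>. indicator S1 x *\<^sub>R D x \<le> indicator S1 x"
      by (rule AE_I2) (auto simp: indicator_def dest: D_lt)
  qed (rule S1_sets)
  also have "\<dots> = 1" using em S1_sets by (simp add: measure_def)
  finally show ?thesis .
qed

lemma E_half_odd: "E (2 * j + 1) (1 / 2) = -1"
proof -
  have "E (2 * j + 1) (1 / 2) = E (2 * j) (1 / 2) * E 1 (1 / 2)" by (simp add: E_mult)
  also have "E (2 * j) (1 / 2) = E j (of_int 1)" unfolding E_def by (rule arg_cong[where f=cis]) simp
  also have "E j (of_int 1) = 1" by (rule E_int)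
  also have "E 1 (1 / 2) = -1" by (simp add: E_def)
  finally show ?thesis by simp
qed

lemma c_odd: "norm (c (2 * j + 1)) < 1"
proof -
  let ?k = "2 * j + 1"
  have geq: "g ?k y = complex_of_real (J (y / 2) - J ((y + 1) / 2)) * E ?k (y / 2)" for y
  proof -
    have e: "(y + 1) / 2 = y / 2 + 1 / 2" by simp
    have h: "E ?k ((y + 1) / 2) = - E ?k (y / 2)"
      unfolding e E_add E_half_odd by simp
    show ?thesis unfolding g_def h by (simp add: algebra_simps)
  qed
  have "norm (c ?k) = norm (LINT y:S1|\<mu>. g ?k y)" by (simp add: gibbs_E)
  also have "\<dots> \<le> (LINT y:S1|\<mu>. norm (g ?k y))"
    unfolding set_lebesgue_integral_def
    by (rule order_trans[OF integral_norm_bound]) (simp add: abs_mult)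
  also have "\<dots> = (LINT y:S1|\<mu>. D y)"
    by (rule set_lebesgue_integral_cong[OF S1_sets]) (auto simp: geq D_def norm_mult simp del: of_real_diff)
  also have "\<dots> < 1" by (rule D_int_lt)
  finally show ?thesis .
qed

lemma c_lt: "k \<noteq> 0 \<Longrightarrow> norm (c k) < 1"
proof (induction "nat \<bar>k\<bar>" arbitrary: k rule: less_induct)
  case less
  show ?case
  proof (cases "even k")
    case True
    then obtain m where m: "k = 2 * m" by (auto elim: evenE)
    then have "m \<noteq> 0" "nat \<bar>m\<bar> < nat \<bar>k\<bar>" using less.prems by auto
    then show ?thesis using less.hyps[of m] m c_double by simp
  next
    case False
    then obtain j where "k = 2 * j + 1" by (auto elim: oddE)
    then show ?thesis using c_odd by simp
  qed
qed

end



lemma exp_deriv: assumes "a \<noteq> 0"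
  shows "((\<lambda>z. exp (a * z) / a) has_field_derivative exp (a * z)) (at z)"
  using assms by (auto intro!: derivative_eq_intros simp: field_simps)

lemma E_deriv:
  assumes k: "k \<noteq> 0"
  shows "((\<lambda>x. E k x / (\<i> * of_real (2 * pi * of_int k))) has_vector_derivative E k x) (at x within s)"
proof -
  define a where "a = \<i> * complex_of_real (2 * pi * of_int k)"
  have a0: "a \<noteq> 0" using k by (simp add: a_def)
  have eq: "E k y = exp (a * complex_of_real y)" for y
    by (simp add: E_def a_def cis_conv_exp mult_ac)
  have "((\<lambda>y. exp (a * complex_of_real y) / a) has_vector_derivative exp (a * complex_of_real x)) (at x within s)"
    by (rule has_vector_derivative_real_field[OF exp_deriv[OF a0]])
  then show ?thesis unfolding eq a_def[symmetric] .
qed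

lemma E_has_integral:
  assumes k: "k \<noteq> 0"
  shows "(E k has_integral 0) {0..1}"
proof -
  have "(E k has_integral (E k 1 / (\<i> * of_real (2 * pi * of_int k)) - E k 0 / (\<i> * of_real (2 * pi * of_int k)))) {0..1}"
    by (rule fundamental_theorem_of_calculus[OF _ E_deriv[OF k]]) simp
  moreover have "E k 1 = 1" using E_int[of k 1] by simp
  moreover have "E k 0 = 1" by (simp add: E_def)
  ultimately show ?thesis by simp
qed

lemma lborel_S1: "emeasure lborel S1 = 1"
  by (simp add: S1_def)

lemma E_int_lborel: "set_integrable lborel S1 (E k)"
  by (rule S1_integrable[where B=1]) (auto simp: lborel_S1 intro: continuous_E)

lemma lebesgue_E: "(LINT x:S1|lborel. E k x) = (if k = 0 then 1 else 0)"
proof (cases "k = 0")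
  case True
  have "(LINT x:S1|lborel. E k x) = (LINT x:S1|lborel. 1)" using True by simp
  also have "\<dots> = 1" by (subst set_integral_const) (auto simp: S1_def measure_def)
  finally show ?thesis using True by simp
next
  case False
  have sub: "set_integrable lborel {0<..<1} (E k)"
    by (rule set_integrable_subset[OF E_int_lborel]) (auto simp: S1_def)
  have "(LINT x:S1|lborel. E k x) = (LINT x:{0<..<1}|lborel. E k x)"
  proof (rule set_integral_cong_set)
    show "set_borel_measurable lborel {0<..<1} (E k)"
      using sub by (simp add: set_integrable_def set_borel_measurable_def)
    show "set_borel_measurable lborel S1 (E k)"
      using E_int_lborel by (simp add: set_integrable_def set_borel_measurable_def)
    show "AE x in lborel. (x \<in> {0<..<1}) = (x \<in> S1)"
      using AE_lborel_singleton[of 0] by eventually_elim (auto simp: S1_def)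
  qed
  also have "\<dots> = integral {0<..<1} (E k)"
    by (rule set_borel_integral_eq_integral(2)[OF sub])
  also have "\<dots> = 0"
    using E_has_integral[OF False] by (simp add: has_integral_Icc_iff_Ioo integral_unique)
  finally show ?thesis using False by simp
qed



lemma circ_cont_imp_cont:
  assumes "circ_continuous \<phi>"
  shows "continuous_on S1 \<phi>"
  unfolding continuous_on_iff
proof (intro ballI allI impI)
  fix x e :: real assume x: "x \<in> S1" and e: "0 < e"
  obtain d where d: "d > 0" "\<forall>y\<in>S1. circ_dist x y < d \<longrightarrow> \<bar>\<phi> y - \<phi> x\<bar> < e"
    using assms x e unfolding circ_continuous_def by blast
  show "\<exists>d>0. \<forall>x'\<in>S1. dist x' x < d \<longrightarrow> dist (\<phi> x') (\<phi> x) < e"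
  proof (intro exI[of _ d] conjI ballI impI)
    fix y assume y: "y \<in> S1" "dist y x < d"
    have "circ_dist x y < d" using circ_dist_le[of x y] y(2) by (simp add: dist_real_def abs_minus_commute)
    then show "dist (\<phi> y) (\<phi> x) < e" using d(2) y(1) by (simp add: dist_real_def)
  qed (use d in auto)
qed

lemma generic_approx:
  assumes sM: "sets M = sets borel" and eM: "emeasure M S1 = 1"
    and phic: "continuous_on S1 \<phi>" and K: "finite K"
    and apx: "\<And>t. t \<in> S1 \<Longrightarrow> \<bar>\<phi> t - Re (\<Sum>k\<in>K. a k * E k t)\<bar> \<le> \<delta>"
  shows "\<bar>(LINT x:S1|M. \<phi> x) - Re (\<Sum>k\<in>K. a k * (LINT x:S1|M. E k x))\<bar> \<le> \<delta>"
proof -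
  define h where "h t = (\<Sum>k\<in>K. a k * E k t)" for t
  have fin: "emeasure M S1 < \<infinity>" using eM by simp
  have S1M: "S1 \<in> sets M" using sM by (simp add: S1_def)
  have Eint: "set_integrable M S1 (E k)" for k
    by (rule S1_integrable[OF sM fin continuous_E, where B=1]) simp
  define B where "B = (\<Sum>k\<in>K. norm (a k))"
  have hc: "continuous_on S1 h" unfolding h_def by (intro continuous_intros)
  have hb: "norm (h t) \<le> B" for t
  proof -
    have "norm (h t) \<le> (\<Sum>k\<in>K. norm (a k * E k t))" unfolding h_def by (rule norm_sum)
    also have "\<dots> = B" by (simp add: B_def norm_mult)
    finally show ?thesis .
  qed
  have hint: "set_integrable M S1 h" by (rule S1_integrable[OF sM fin hc hb])
  have Rec: "continuous_on S1 (\<lambda>t. Re (h t))" by (intro continuous_intros hc)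
  have Reint: "set_integrable M S1 (\<lambda>t. Re (h t))"
  proof (rule S1_integrable[OF sM fin Rec, where B=B])
    fix t show "norm (Re (h t)) \<le> B" using hb[of t] abs_Re_le_cmod[of "h t"] by simp
  qed
  have phiint: "set_integrable M S1 \<phi>"
  proof (rule S1_integrable[OF sM fin phic, where B="B + \<delta>"])
    fix t assume t: "t \<in> S1"
    have "\<bar>Re (h t)\<bar> \<le> B" using hb[of t] abs_Re_le_cmod[of "h t"] by linarith
    then show "norm (\<phi> t) \<le> B + \<delta>" using apx[OF t] unfolding h_def[symmetric] by simp
  qed
  have sumint: "(LINT x:S1|M. h x) = (\<Sum>k\<in>K. a k * (LINT x:S1|M. E k x))"
  proof -
    have "(LINT x:S1|M. h x) = integral\<^sup>L M (\<lambda>x. \<Sum>k\<in>K. indicator S1 x *\<^sub>R (a k * E k x))"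
      unfolding set_lebesgue_integral_def h_def by (simp add: scaleR_sum_right)
    also have "\<dots> = (\<Sum>k\<in>K. integral\<^sup>L M (\<lambda>x. indicator S1 x *\<^sub>R (a k * E k x)))"
      using set_integrable_mult_right[OF Eint] unfolding set_integrable_def
      by (intro Bochner_Integration.integral_sum) blast
    also have "\<dots> = (\<Sum>k\<in>K. a k * (LINT x:S1|M. E k x))"
      by (simp flip: set_lebesgue_integral_def)
    finally show ?thesis .
  qed
  have "Re (\<Sum>k\<in>K. a k * (LINT x:S1|M. E k x)) = (LINT x:S1|M. Re (h x))"
    unfolding sumint[symmetric] by (rule set_int_Re[OF hint])
  moreover have "(LINT x:S1|M. \<phi> x) - (LINT x:S1|M. Re (h x)) = (LINT x:S1|M. \<phi> x - Re (h x))"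
    by (rule set_integral_diff(2)[OF phiint Reint, symmetric])
  moreover have cst: "(LINT x:S1|M. c) = c" for c :: real
    using set_integral_const[OF S1M] eM by (simp add: measure_def)
  moreover have "(LINT x:S1|M. \<phi> x - Re (h x)) \<le> (LINT x:S1|M. \<delta>)"
    by (rule set_integral_mono[OF set_integral_diff(1)[OF phiint Reint]])
       (use eM S1M fin in \<open>auto simp: set_integrable_def intro!: integrable_real_indicator dest!: apx simp: h_def\<close>)
  moreover have "(LINT x:S1|M. - \<delta>) \<le> (LINT x:S1|M. \<phi> x - Re (h x))"
    by (rule set_integral_mono[OF _ set_integral_diff(1)[OF phiint Reint]])
       (use eM S1M fin in \<open>auto simp: set_integrable_def intro!: integrable_real_indicator dest!: apx simp: h_def\<close>)
  ultimately show ?thesis by (simp add: abs_le_iff)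
qed



lemma tri3:
  fixes x p b y r :: real
  assumes "\<bar>x - p\<bar> \<le> r / 4" "\<bar>p - b\<bar> < r / 4" "\<bar>y - b\<bar> \<le> r / 4" "0 < r"
  shows "\<bar>x - y\<bar> < r"
  using assms by linarith

theorem theorem4:
  fixes J :: "real \<Rightarrow> real" and \<mu> :: "real measure"
  assumes "\<forall>x\<in>S1. J x > 0"
    and "circ_holder J"
    and "\<forall>y\<in>S1. (\<Sum>x\<in>{x\<in>S1. doubling x = y}. J x) = 1"
    and "gibbs_prob J \<mu>"
  shows "weak_conv_to_lebesgue (conv_power \<mu>)"
proof -
  interpret gibbs_setup J \<mu> using assms by (rule gibbs_setup.intro)
  have props: "prob_space (conv_power \<mu> n) \<and> sets (conv_power \<mu> n) = sets borel \<and> emeasure (conv_power \<mu> n) S1 = 1" for n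
    by (cases n) (use conv_power_props[OF pm sm em] pm sm em in auto)
  have Enu: "(LINT x:S1|conv_power \<mu> (Suc m). E k x) = c k ^ Suc m" for m k
  proof -
    have "(LINT x:S1|conv_power \<mu> (Suc m). E k x) = integral\<^sup>L (conv_power \<mu> (Suc m)) (E k)"
      using props[of "Suc m"] by (intro set_int_full measurable_E) auto
    also have "\<dots> = c k ^ Suc m" using conv_power_props[OF pm sm em, of m] by (simp add: c_def)
    finally show ?thesis .
  qed
  have climit: "(\<lambda>n. c k ^ n) \<longlonglongrightarrow> (if k = 0 then 1 else 0)" for k
  proof (cases "k = 0")
    case True
    have e0: "E 0 = (\<lambda>_. 1)" by (rule ext) simp
    have "c 0 = 1" using prob_space.prob_space[OF pm] by (simp add: c_def e0)
    then show ?thesis using True by simp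
  next
    case False
    then show ?thesis using LIMSEQ_power_zero[OF c_lt[OF False]] by simp
  qed
  show ?thesis unfolding weak_conv_to_lebesgue_def
  proof (intro allI impI)
    fix \<phi> assume phi: "circ_continuous \<phi>"
    have phic: "continuous_on S1 \<phi>" by (rule circ_cont_imp_cont[OF phi])
    show "(\<lambda>n. LINT x:S1|conv_power \<mu> n. \<phi> x) \<longlonglongrightarrow> (LINT x:S1|lborel. \<phi> x)"
    proof (rule LIMSEQ_I)
      fix r :: real assume r: "0 < r"
      obtain h where h: "LC h" "\<forall>t\<in>S1. \<bar>\<phi> t - Re (h t)\<bar> < r / 4"
        using trig_approx[OF phi, of "r / 4"] r by auto
      obtain K a where K: "finite K" "\<forall>t. h t = (\<Sum>k\<in>K. a k * E k t)"
        using h(1) unfolding LC_def by blast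
      have apx: "\<bar>\<phi> t - Re (\<Sum>k\<in>K. a k * E k t)\<bar> \<le> r / 4" if "t \<in> S1" for t
        using h(2) that K(2) by (metis less_imp_le)
      define \<beta> where "\<beta> = Re (\<Sum>k\<in>K. a k * (if k = 0 then 1 else 0))"
      have L: "\<bar>(LINT x:S1|lborel. \<phi> x) - \<beta>\<bar> \<le> r / 4"
        using generic_approx[OF sets_lborel lborel_S1 phic K(1) apx] by (simp add: lebesgue_E \<beta>_def)
      have conv: "(\<lambda>n. Re (\<Sum>k\<in>K. a k * c k ^ n)) \<longlonglongrightarrow> \<beta>"
        unfolding \<beta>_def by (intro tendsto_intros climit)
      obtain N where N: "\<forall>n\<ge>N. norm (Re (\<Sum>k\<in>K. a k * c k ^ n) - \<beta>) < r / 4"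
        using LIMSEQ_D[OF conv, of "r / 4"] r by auto
      show "\<exists>no. \<forall>n\<ge>no. norm ((LINT x:S1|conv_power \<mu> n. \<phi> x) - (LINT x:S1|lborel. \<phi> x)) < r"
      proof (intro exI[of _ "Suc N"] allI impI)
        fix n assume n: "Suc N \<le> n"
        then obtain m where m: "n = Suc m" by (cases n) auto
        have A: "\<bar>(LINT x:S1|conv_power \<mu> n. \<phi> x) - Re (\<Sum>k\<in>K. a k * c k ^ n)\<bar> \<le> r / 4"
          using generic_approx[of "conv_power \<mu> n", OF _ _ phic K(1) apx] props[of n]
          by (simp add: m Enu)
        have B: "\<bar>Re (\<Sum>k\<in>K. a k * c k ^ n) - \<beta>\<bar> < r / 4" using N n by simp
        show "norm ((LINT x:S1|conv_power \<mu> n. \<phi> x) - (LINT x:S1|lborel. \<phi> x)) < r"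
          using tri3[OF A B L r] by simp
      qed
    qed
  qed
qed


end
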